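(* Work in the projective model of $\mathbf{Sol}$ geometry described in the context. Let $P_1=(1,0,0,0)$, $P_2=(1,a,b,c)$ with $a,b,c\in\mathbb{R}$, and $\sigma\in\mathbb{R}^+$. The translation-like Apollonius surface $\mathcal{AS}^\sigma_{P_1P_2}$ (the set of points $P=(1,x,y,z)$ with $\sigma\, d^t(P_1,P)=d^t(P,P_2)$) is given by the following implicit equations. (1) If $c\neq0$: for $z\neq0,c$: \[\frac{|c-z|}{|e^{c}-e^z|}\sqrt{(a-x)^2e^{2(c+z)}+(e^{c}-e^{z})^2+(b-y)^2}=\sigma\frac{|z|}{|e^{z}-1|}\sqrt{x^2e^{2z}+(e^{z}-1)^2+y^2};\] for $z=c$: \[\sqrt{(x-a)^2e^{2c}+(y-b)^2e^{-2c}}=\sigma\frac{|z|}{|e^{z}-1|}\sqrt{x^2e^{2z}+(e^{z}-1)^2+y^2};\] for $z=0$: \[\frac{|c|}{|e^{c}-1|}\sqrt{(a-x)^2e^{2c}+(e^{c}-1)^2+(b-y)^2}=\sigma\sqrt{x^2+y^2}.\] (2) If $c=0$: for $z\neq0$: \[\frac{|z|}{|e^z-1|}\sqrt{(a-x)^2e^{2z}+(e^{z}-1)^2+(b-y)^2}=\sigma\frac{|z|}{|e^{z}-1|}\sqrt{x^2e^{2z}+(e^{z}-1)^2+y^2};\] for $z=0$: \[\sqrt{(x-a)^2+(y-b)^2}=\sigma\sqrt{x^2+y^2}.\]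
   Context: $\mathbf{Sol}$ is modelled on $\mathbb{R}^3$ with points in homogeneous coordinates $(1,x,y,z)$. For $Q=(1,q_1,q_2,q_3)$ the translation $\mathbf{T}_Q$ acts on row vectors from the right by the matrix $\begin{pmatrix}1&q_1&q_2&q_3\\0&e^{-q_3}&0&0\\0&0&e^{q_3}&0\\0&0&0&1\end{pmatrix}$, i.e. $(1,a,b,c)\mapsto(1,q_1+ae^{-q_3},q_2+be^{q_3},q_3+c)$; it maps $E_0=(1,0,0,0)$ to $Q$. A translation curve starting at $E_0$ with unit initial tangent $(u,v,w)=(\cos\theta\cos\phi,\cos\theta\sin\phi,\sin\theta)$ solves $\dot x=ue^{-z},\ \dot y=ve^{z},\ \dot z=w$ from the origin: $x(t)=-\frac uw(e^{-wt}-1)$, $y(t)=\frac vw(e^{wt}-1)$, $z(t)=wt$ if $w\ne0$, and $x=ut,y=vt,z=0$ if $w=0$. Translation curves from $Q$ are the $\mathbf{T}_Q$-images of these. The translation distance $d^t(Q,P)$ is the length (parameter $t$) of the translation curve segment from $Q$ to $P$; equivalently $d^t(Q,P)=d^t(E_0,\mathbf{T}_Q^{-1}(P))$. For $\sigma\in\mathbb{R}^+$, the translation-like Apollonius surface of $P_1,P_2$ with parameter $\sigma$ is $\{P:\sigma\, d^t(P_1,P)=d^t(P,P_2)\}$. *)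

theory Defs
  imports Complex_Main
begin

text \<open>Points of Sol in homogeneous coordinates (1,x,y,z) are represented by
  their affine part (x,y,z) :: real \<times> real \<times> real.\<close>

type_synonym solpt = "real \<times> real \<times> real"

definition sol_transl :: "solpt \<Rightarrow> solpt \<Rightarrow> solpt" where
  "sol_transl Q P = (case Q of (q1, q2, q3) \<Rightarrow> case P of (a, b, c) \<Rightarrow>
      (q1 + a * exp (- q3), q2 + b * exp q3, q3 + c))"

text \<open>Translation curve from the origin E0 with unit initial tangent (u,v,w), at parameter t.\<close>
definition trans_curve :: "real \<Rightarrow> real \<Rightarrow> real \<Rightarrow> real \<Rightarrow> solpt" where
  "trans_curve u v w t =
     (if w = 0 then (u * t, v * t, 0)
      else (- (u / w) * (exp (- w * t) - 1), (v / w) * (exp (w * t) - 1), w * t))"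

text \<open>Translation distance: the length (parameter t) of the translation curve segment
  from Q to P, the translation curves from Q being the T_Q-images of those from E0.\<close>
definition trans_dist :: "solpt \<Rightarrow> solpt \<Rightarrow> real" where
  "trans_dist Q P = (THE t. t \<ge> 0 \<and>
     (\<exists>u v w. u\<^sup>2 + v\<^sup>2 + w\<^sup>2 = 1 \<and> sol_transl Q (trans_curve u v w t) = P))"

definition apollonius_surface :: "real \<Rightarrow> solpt \<Rightarrow> solpt \<Rightarrow> solpt set" where
  "apollonius_surface \<sigma> P1 P2 = {P. \<sigma> * trans_dist P1 P = trans_dist P P2}"

end

theory Submission
  imports Defs
begin


definition Dz :: "real \<Rightarrow> real \<Rightarrow> real \<Rightarrow> real" where
  "Dz x y z = (if z = 0 then sqrt (x\<^sup>2 + y\<^sup>2)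
     else \<bar>z\<bar> / \<bar>exp z - 1\<bar> * sqrt (x\<^sup>2 * exp (2 * z) + (exp z - 1)\<^sup>2 + y\<^sup>2))"

lemma curve_good:
  assumes "t \<ge> 0" "u\<^sup>2 + v\<^sup>2 + w\<^sup>2 = 1" "trans_curve u v w t = (x, y, z)"
  shows "t = Dz x y z"
proof (cases "w = 0")
  case True
  with assms have xyz: "x = u * t" "y = v * t" "z = 0" by (auto simp: trans_curve_def)
  then have "x\<^sup>2 + y\<^sup>2 = t\<^sup>2 * (u\<^sup>2 + v\<^sup>2)" by (simp add: power_mult_distrib algebra_simps)
  also have "\<dots> = t\<^sup>2" using assms(2) True by simp
  finally show ?thesis using xyz assms(1) by (simp add: Dz_def)
next
  case False
  with assms have xyz: "x = - (u / w) * (exp (- w * t) - 1)" "y = (v / w) * (exp (w * t) - 1)" "z = w * t"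
    by (auto simp: trans_curve_def)
  show ?thesis
  proof (cases "z = 0")
    case True
    then have "t = 0" using xyz False by simp
    then show ?thesis using xyz True by (simp add: Dz_def)
  next
    case z0: False
    have ez: "exp z - 1 \<noteq> 0" using z0 by simp
    have x1: "x = - (u / w) * (exp (- z) - 1)" using xyz by simp
    have "x * exp z = - (u / w) * (exp (- z) * exp z - exp z)" unfolding x1 by (simp add: algebra_simps)
    then have xe: "x * exp z = (u / w) * (exp z - 1)" by (simp add: exp_minus_inverse algebra_simps)
    have ye: "y = (v / w) * (exp z - 1)" using xyz by simp
    have "x\<^sup>2 * exp (2 * z) + (exp z - 1)\<^sup>2 + y\<^sup>2 = (x * exp z)\<^sup>2 + (exp z - 1)\<^sup>2 + y\<^sup>2"
      by (simp add: power_mult_distrib exp_double)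
    also have "\<dots> = ((exp z - 1) / w)\<^sup>2 * (u\<^sup>2 + v\<^sup>2 + w\<^sup>2)"
      unfolding xe ye using False by (simp add: power_mult_distrib power_divide field_simps; simp add: power2_eq_square algebra_simps)
    also have "\<dots> = ((exp z - 1) / w)\<^sup>2" using assms(2) by simp
    finally have S: "sqrt (x\<^sup>2 * exp (2 * z) + (exp z - 1)\<^sup>2 + y\<^sup>2) = \<bar>exp z - 1\<bar> / \<bar>w\<bar>"
      by (simp add: abs_div)
    have "Dz x y z = \<bar>z\<bar> / \<bar>w\<bar>" using z0 ez S by (simp add: Dz_def)
    also have "\<dots> = t" using xyz(3) False assms(1) by (simp add: abs_mult)
    finally show ?thesis by simp
  qed
qed

lemma curve_exists:
  "\<exists>u v w. u\<^sup>2 + v\<^sup>2 + w\<^sup>2 = 1 \<and> trans_curve u v w (Dz x y z) = (x, y, z)"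
proof (cases "z = 0")
  case True
  show ?thesis
  proof (cases "x\<^sup>2 + y\<^sup>2 = 0")
    case True
    then have "x = 0" "y = 0" by (auto simp: sum_power2_eq_zero_iff)
    then show ?thesis using \<open>z = 0\<close>
      by (intro exI[of _ 1] exI[of _ 0]) (simp add: Dz_def trans_curve_def)
  next
    case False
    define t where "t = sqrt (x\<^sup>2 + y\<^sup>2)"
    have "x\<^sup>2 + y\<^sup>2 \<ge> 0" by simp
    then have xyp: "x\<^sup>2 + y\<^sup>2 > 0" using False by linarith
    then have tp: "t > 0" using t_def by simp
    have tt: "t\<^sup>2 = x\<^sup>2 + y\<^sup>2" unfolding t_def by simp
    have "(x / t)\<^sup>2 + (y / t)\<^sup>2 + 0\<^sup>2 = 1" using tp tt xyp \<open>x\<^sup>2 + y\<^sup>2 \<noteq> 0\<close> by (simp add: power_divide add_divide_distrib[symmetric])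
    moreover have "trans_curve (x / t) (y / t) 0 (Dz x y z) = (x, y, z)"
      using tp \<open>z = 0\<close> by (simp add: Dz_def trans_curve_def t_def[symmetric])
    ultimately show ?thesis by blast
  qed
next
  case False
  define S where "S = sqrt (x\<^sup>2 * exp (2 * z) + (exp z - 1)\<^sup>2 + y\<^sup>2)"
  have ez: "exp z - 1 \<noteq> 0" using False by simp
  have pos: "x\<^sup>2 * exp (2 * z) + (exp z - 1)\<^sup>2 + y\<^sup>2 > 0"
    using ez by (simp add: add_nonneg_pos add_pos_nonneg)
  have Sp: "S > 0" using pos S_def by simp
  have SS: "S\<^sup>2 = x\<^sup>2 * exp (2 * z) + (exp z - 1)\<^sup>2 + y\<^sup>2" using pos S_def by simp
  define w where "w = (exp z - 1) / S"
  have w0: "w \<noteq> 0" using ez Sp w_def by simp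
  have sgn: "z / (exp z - 1) > 0"
  proof (cases "z > 0")
    case True then show ?thesis by simp
  next
    case f: False then have "z < 0" using False by simp
    then have "exp z < 1" by simp
    then show ?thesis using \<open>z < 0\<close> by (simp add: divide_neg_neg)
  qed
  have D: "Dz x y z = z * S / (exp z - 1)"
  proof -
    have "\<bar>z\<bar> / \<bar>exp z - 1\<bar> = z / (exp z - 1)" using sgn by (metis abs_divide abs_of_pos)
    then show ?thesis using False S_def by (simp add: Dz_def)
  qed
  have wt: "w * Dz x y z = z" using D w_def ez Sp by simp
  have e2: "exp (2 * z) = (exp z)\<^sup>2" by (simp add: exp_double[symmetric])
  have "(x * exp z / S)\<^sup>2 + (y / S)\<^sup>2 + w\<^sup>2 = (x\<^sup>2 * exp (2 * z) + (exp z - 1)\<^sup>2 + y\<^sup>2) / S\<^sup>2"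
    unfolding w_def e2 by (simp add: power_divide power_mult_distrib add_divide_distrib)
  also have "\<dots> = 1" unfolding SS[symmetric] using Sp by simp
  finally have "(x * exp z / S)\<^sup>2 + (y / S)\<^sup>2 + w\<^sup>2 = 1" .
  moreover have "trans_curve (x * exp z / S) (y / S) w (Dz x y z) = (x, y, z)"
  proof -
    have "- (x * exp z / S / w) * (exp (- w * Dz x y z) - 1) = x"
    proof -
      have m: "- w * Dz x y z = - z" using wt by simp
      have "exp (- z) - 1 = - (exp z - 1) / exp z" by (simp add: exp_minus field_simps)
      then show ?thesis unfolding m using Sp ez unfolding w_def by (simp add: field_simps)
    qed
    moreover have "(y / S / w) * (exp (w * Dz x y z) - 1) = y"
      using wt Sp ez unfolding w_def by simp
    ultimately show ?thesis using w0 wt by (simp add: trans_curve_def)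
  qed
  ultimately show ?thesis by blast
qed

lemma dist0: "trans_dist (0, 0, 0) (x, y, z) = Dz x y z"
proof -
  have "trans_dist (0, 0, 0) (x, y, z) = (THE t. t \<ge> 0 \<and>
     (\<exists>u v w. u\<^sup>2 + v\<^sup>2 + w\<^sup>2 = 1 \<and> trans_curve u v w t = (x, y, z)))"
    unfolding trans_dist_def by (simp add: sol_transl_def case_prod_beta)
  also have "\<dots> = Dz x y z"
  proof (rule the_equality)
    have "Dz x y z \<ge> 0" by (simp add: Dz_def)
    then show "Dz x y z \<ge> 0 \<and> (\<exists>u v w. u\<^sup>2 + v\<^sup>2 + w\<^sup>2 = 1 \<and> trans_curve u v w (Dz x y z) = (x, y, z))"
      using curve_exists by blast
  next
    fix t assume "0 \<le> t \<and> (\<exists>u v w. u\<^sup>2 + v\<^sup>2 + w\<^sup>2 = 1 \<and> trans_curve u v w t = (x, y, z))"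
    then show "t = Dz x y z" using curve_good by blast
  qed
  finally show ?thesis .
qed

lemma distQ: "trans_dist (x, y, z) (a, b, c) = Dz ((a - x) * exp z) ((b - y) * exp (- z)) (c - z)"
proof -
  have eq: "sol_transl (x, y, z) R = (a, b, c) \<longleftrightarrow> R = ((a - x) * exp z, (b - y) * exp (- z), c - z)" for R
  proof -
    obtain r1 r2 r3 where R: "R = (r1, r2, r3)" by (cases R) auto
    have "x + r1 * exp (- z) = a \<longleftrightarrow> r1 = (a - x) * exp z" by (auto simp: exp_minus field_simps)
    moreover have "y + r2 * exp z = b \<longleftrightarrow> r2 = (b - y) * exp (- z)" by (auto simp: exp_minus field_simps)
    ultimately show ?thesis unfolding R sol_transl_def by auto
  qed
  have "trans_dist (x, y, z) (a, b, c) = trans_dist (0, 0, 0) ((a - x) * exp z, (b - y) * exp (- z), c - z)"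
    unfolding trans_dist_def eq by (simp add: sol_transl_def case_prod_beta)
  then show ?thesis by (simp add: dist0)
qed

lemma K1:
  assumes "c \<noteq> z"
  shows "Dz ((a - x) * exp z) ((b - y) * exp (- z)) (c - z) =
    \<bar>c - z\<bar> / \<bar>exp c - exp z\<bar> * sqrt ((a - x)\<^sup>2 * exp (2 * (c + z)) + (exp c - exp z)\<^sup>2 + (b - y)\<^sup>2)"
proof -
  define I where "I = ((a - x) * exp z)\<^sup>2 * exp (2 * (c - z)) + (exp (c - z) - 1)\<^sup>2 + ((b - y) * exp (- z))\<^sup>2"
  define T where "T = (a - x)\<^sup>2 * exp (2 * (c + z)) + (exp c - exp z)\<^sup>2 + (b - y)\<^sup>2"
  have ec: "exp (c - z) = exp c / exp z" by (simp add: exp_diff)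
  have e2: "exp (2 * (c - z)) = (exp c / exp z)\<^sup>2" "exp (2 * (c + z)) = (exp c * exp z)\<^sup>2"
    by (simp_all only: exp_double exp_diff exp_add power_divide power_mult_distrib)
  have TI: "T = (exp z)\<^sup>2 * I" unfolding T_def I_def e2 ec
    by (simp add: exp_minus power_mult_distrib power_divide field_simps; simp add: eval_nat_numeral algebra_simps)
  have sI: "sqrt I = sqrt T / exp z" unfolding TI by (simp add: real_sqrt_mult)
  have ab: "\<bar>exp (c - z) - 1\<bar> = \<bar>exp c - exp z\<bar> / exp z"
  proof -
    have "exp (c - z) - 1 = (exp c - exp z) / exp z" unfolding ec by (simp add: field_simps)
    then show ?thesis by (simp add: abs_div)
  qed
  have "Dz ((a - x) * exp z) ((b - y) * exp (- z)) (c - z) = \<bar>c - z\<bar> / \<bar>exp (c - z) - 1\<bar> * sqrt I"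
    using assms unfolding Dz_def I_def by simp
  also have "\<dots> = \<bar>c - z\<bar> / \<bar>exp c - exp z\<bar> * sqrt T" unfolding ab sI by simp
  finally show ?thesis unfolding T_def .
qed

lemma K2:
  shows "Dz ((a - x) * exp c) ((b - y) * exp (- c)) (c - c) =
    sqrt ((x - a)\<^sup>2 * exp (2 * c) + (y - b)\<^sup>2 * exp (- 2 * c))"
proof -
  have "exp (2 * c) = (exp c)\<^sup>2" "exp (- 2 * c) = (exp (- c))\<^sup>2"
    by (simp_all add: exp_double[symmetric])
  then show ?thesis unfolding Dz_def by (simp add: power_mult_distrib power2_commute)
qed

theorem lemma3p6:
  fixes a b c \<sigma> x y z :: real
  assumes "\<sigma> > 0"
  shows "(x, y, z) \<in> apollonius_surface \<sigma> (0, 0, 0) (a, b, c) \<longleftrightarrow>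
    (if c \<noteq> 0 then
       (if z \<noteq> 0 \<and> z \<noteq> c then
          \<bar>c - z\<bar> / \<bar>exp c - exp z\<bar> *
            sqrt ((a - x)\<^sup>2 * exp (2 * (c + z)) + (exp c - exp z)\<^sup>2 + (b - y)\<^sup>2)
          = \<sigma> * (\<bar>z\<bar> / \<bar>exp z - 1\<bar>) * sqrt (x\<^sup>2 * exp (2 * z) + (exp z - 1)\<^sup>2 + y\<^sup>2)
        else if z = c then
          sqrt ((x - a)\<^sup>2 * exp (2 * c) + (y - b)\<^sup>2 * exp (- 2 * c))
          = \<sigma> * (\<bar>z\<bar> / \<bar>exp z - 1\<bar>) * sqrt (x\<^sup>2 * exp (2 * z) + (exp z - 1)\<^sup>2 + y\<^sup>2)
        else
          \<bar>c\<bar> / \<bar>exp c - 1\<bar> *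
            sqrt ((a - x)\<^sup>2 * exp (2 * c) + (exp c - 1)\<^sup>2 + (b - y)\<^sup>2)
          = \<sigma> * sqrt (x\<^sup>2 + y\<^sup>2))
     else
       (if z \<noteq> 0 then
          \<bar>z\<bar> / \<bar>exp z - 1\<bar> *
            sqrt ((a - x)\<^sup>2 * exp (2 * z) + (exp z - 1)\<^sup>2 + (b - y)\<^sup>2)
          = \<sigma> * (\<bar>z\<bar> / \<bar>exp z - 1\<bar>) * sqrt (x\<^sup>2 * exp (2 * z) + (exp z - 1)\<^sup>2 + y\<^sup>2)
        else
          sqrt ((x - a)\<^sup>2 + (y - b)\<^sup>2) = \<sigma> * sqrt (x\<^sup>2 + y\<^sup>2)))"
proof -
  have L: "(x, y, z) \<in> apollonius_surface \<sigma> (0, 0, 0) (a, b, c) \<longleftrightarrow>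
     Dz ((a - x) * exp z) ((b - y) * exp (- z)) (c - z) = \<sigma> * Dz x y z"
    unfolding apollonius_surface_def by (simp add: dist0 distQ eq_commute)
  show ?thesis
  proof (cases "c = z")
    case True
    then have "Dz ((a - x) * exp z) ((b - y) * exp (- z)) (c - z) =
      sqrt ((x - a)\<^sup>2 * exp (2 * c) + (y - b)\<^sup>2 * exp (- 2 * c))" using K2[of a x c b y] by simp
    then show ?thesis unfolding L using True by (simp add: Dz_def mult.assoc power2_commute)
  next
    case False
    note K = K1[OF False, of a x b y]
    have s1: "\<bar>exp 0 - exp z\<bar> = \<bar>exp z - 1\<bar>" by simp
    have s2: "(exp 0 - exp z)\<^sup>2 = (exp z - 1)\<^sup>2" by (simp add: power2_commute)
    show ?thesis unfolding L K using False
      by (cases "c = 0"; cases "z = 0") (auto simp: Dz_def s1 s2 abs_minus_commute mult.assoc power2_commute)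
  qed
qed

end
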